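(* Let $n\ge1$. The coefficient of $x^{n-1}$ in the expansion of \[\frac{G(x)-H(x)}{x^2}\,(1+a(x)x^2)\] has the form $u\big(a_{n-1}+S_0(n)+S_1(n)v+S_2(n)v^2+\cdots+S_n(n)v^n\big)$, where $u=2j-1$, $v=j(j-1)$, and each $S_i(n)$ is a polynomial in $a_0,a_1,\dots,a_{n-2}$ with rational coefficients which is independent of $j$. In particular, $S_0(1)=0$ and $S_1(1)=\tfrac16$.
   Context: $j$ is a positive integer; $a_0,a_1,\dots$ are indeterminates and $a(x)=\sum_{i\ge0}a_ix^i$ (formal power series in $x$). Set $G(x)=\prod_{i=0}^{j-1}\frac{1+a(x)x^2}{1+ix}$ and $H(x)=\prod_{i=1-j}^{-1}\frac{1+ix}{1+a(x)x^2}$ (so $G(x)=1+a(x)x^2$ and $H(x)=1$ when $j=1$), viewed as formal power series in $x$. *)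

theory Defs
  imports "HOL-Library.Poly_Mapping" "HOL-Computational_Algebra.Formal_Power_Series"
    "HOL-Computational_Algebra.Fraction_Field"
begin

text \<open>Polynomials with rational coefficients in the indeterminates a_0, a_1, ...:
  a polynomial is a finitely supported map from monomials (finitely supported
  exponent vectors nat =>0 nat; variable k stands for a_k) to rational coefficients.\<close>
type_synonym mpoly_q = "(nat \<Rightarrow>\<^sub>0 nat) \<Rightarrow>\<^sub>0 rat"

type_synonym ratfun_q = "mpoly_q fract"

definition mp_var :: "nat \<Rightarrow> mpoly_q" where
  "mp_var k = Poly_Mapping.single (Poly_Mapping.single k 1) 1"

definition mp_const :: "rat \<Rightarrow> mpoly_q" where
  "mp_const c = Poly_Mapping.single 0 c"

definition mp_vars :: "mpoly_q \<Rightarrow> nat set" where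
  "mp_vars p = \<Union> ((\<lambda>m :: nat \<Rightarrow>\<^sub>0 nat. Poly_Mapping.keys m) ` Poly_Mapping.keys p)"

definition emb :: "mpoly_q \<Rightarrow> ratfun_q" where
  "emb p = Fract p 1"

definition aser :: "ratfun_q fps" where
  "aser = Abs_fps (\<lambda>i. emb (mp_var i))"

definition Gser :: "nat \<Rightarrow> ratfun_q fps" where
  "Gser j = (\<Prod>i\<in>{0..<j}. (1 + aser * fps_X ^ 2) / (1 + of_nat i * fps_X))"

definition Hser :: "nat \<Rightarrow> ratfun_q fps" where
  "Hser j = (\<Prod>i\<in>{1 - int j..-1}. (1 + of_int i * fps_X) / (1 + aser * fps_X ^ 2))"

end

theory Submission
  imports Defs "HOL-Computational_Algebra.Polynomial"
begin


lemma emb_add: "emb (p + q) = emb p + emb q" by (simp add: emb_def)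
lemma emb_mult: "emb (p * q) = emb p * emb q" by (simp add: emb_def)
lemma emb_uminus: "emb (- p) = - emb p" by (simp add: emb_def)
lemma emb_diff: "emb (p - q) = emb p - emb q" by (simp add: emb_def)
lemma emb_0: "emb 0 = 0" by (simp add: emb_def Zero_fract_def)
lemma emb_1: "emb 1 = 1" by (simp add: emb_def One_fract_def)
lemma emb_inj: "emb p = emb q \<Longrightarrow> p = q" by (simp add: emb_def eq_fract)

lemma mp_vars_add: "mp_vars (p + q) \<subseteq> mp_vars p \<union> mp_vars q"
  unfolding mp_vars_def using keys_add[of p q] by auto
lemma mp_vars_mult: "mp_vars (p * q) \<subseteq> mp_vars p \<union> mp_vars q"
proof
  fix k assume "k \<in> mp_vars (p*q)"
  then obtain m where m: "m \<in> Poly_Mapping.keys (p*q)" "k \<in> Poly_Mapping.keys m" unfolding mp_vars_def by auto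
  then obtain a b where ab: "m = a + b" "a \<in> Poly_Mapping.keys p" "b \<in> Poly_Mapping.keys q" using keys_mult[of p q] by auto
  have "k \<in> Poly_Mapping.keys a \<union> Poly_Mapping.keys b" using keys_add[of a b] m ab by auto
  then show "k \<in> mp_vars p \<union> mp_vars q" using ab unfolding mp_vars_def by auto
qed
lemma mp_vars_uminus: "mp_vars (- p) = mp_vars p" unfolding mp_vars_def by simp
lemma mp_vars_const: "mp_vars (mp_const c) = {}" unfolding mp_vars_def mp_const_def by simp
lemma mp_vars_var: "mp_vars (mp_var k) \<subseteq> {k}" unfolding mp_vars_def mp_var_def by simp

definition inS :: "nat \<Rightarrow> ratfun_q \<Rightarrow> bool" where
  "inS N x \<longleftrightarrow> (\<exists>p. mp_vars p \<subseteq> {k. k < N} \<and> x = emb p)"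

lemma inS_add: "inS N x \<Longrightarrow> inS N y \<Longrightarrow> inS N (x + y)"
proof -
  assume "inS N x" "inS N y"
  then obtain p q where "mp_vars p \<subseteq> {k. k < N}" "x = emb p" "mp_vars q \<subseteq> {k. k < N}" "y = emb q"
    unfolding inS_def by blast
  moreover have "mp_vars (p + q) \<subseteq> mp_vars p \<union> mp_vars q" by (rule mp_vars_add)
  ultimately show ?thesis unfolding inS_def by (intro exI[of _ "p + q"]) (auto simp: emb_add)
qed
lemma inS_mult: "inS N x \<Longrightarrow> inS N y \<Longrightarrow> inS N (x * y)"
proof -
  assume "inS N x" "inS N y"
  then obtain p q where "mp_vars p \<subseteq> {k. k < N}" "x = emb p" "mp_vars q \<subseteq> {k. k < N}" "y = emb q"
    unfolding inS_def by blast
  moreover have "mp_vars (p * q) \<subseteq> mp_vars p \<union> mp_vars q" by (rule mp_vars_mult)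
  ultimately show ?thesis unfolding inS_def by (intro exI[of _ "p * q"]) (auto simp: emb_mult)
qed
lemma inS_uminus: "inS N x \<Longrightarrow> inS N (- x)"
proof -
  assume "inS N x"
  then obtain p where "mp_vars p \<subseteq> {k. k < N}" "x = emb p" unfolding inS_def by blast
  thus ?thesis unfolding inS_def by (intro exI[of _ "- p"]) (simp add: emb_uminus mp_vars_uminus)
qed
lemma inS_diff: "inS N x \<Longrightarrow> inS N y \<Longrightarrow> inS N (x - y)"
  using inS_add[of N x "- y"] inS_uminus[of N y] by simp
lemma inS_const: "inS N (emb (mp_const c))"
  unfolding inS_def using mp_vars_const by blast
lemma inS_0: "inS N 0" using inS_const[of N 0] by (simp add: mp_const_def emb_0)
lemma inS_1: "inS N 1" using inS_const[of N 1] by (simp add: mp_const_def emb_1)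
lemma inS_var: "k < N \<Longrightarrow> inS N (emb (mp_var k))"
  unfolding inS_def using mp_vars_var by blast
lemma inS_mono: "inS N x \<Longrightarrow> N \<le> M \<Longrightarrow> inS M x"
proof -
  assume a: "inS N x" "N \<le> M"
  then obtain p where p: "mp_vars p \<subseteq> {k. k < N}" "x = emb p" unfolding inS_def by blast
  have "mp_vars p \<subseteq> {k. k < M}" using p(1) a(2) by auto
  thus ?thesis unfolding inS_def using p(2) by (intro exI[of _ p]) simp
qed
lemma inS_sum: "(\<And>i. i \<in> A \<Longrightarrow> inS N (f i)) \<Longrightarrow> inS N (\<Sum>i\<in>A. f i)"
  by (induction A rule: infinite_finite_induct) (auto intro: inS_0 inS_add)
lemma inS_of_nat: "inS N (of_nat n)"
  by (induction n) (auto intro: inS_0 inS_add inS_1)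
lemma inS_of_int: "inS N (of_int n)"
proof (cases n rule: int_cases2)
  case (nonneg m) thus ?thesis using inS_of_nat[of N m] by simp
next
  case (nonpos m) thus ?thesis using inS_uminus[OF inS_of_nat[of N m]] by simp
qed
lemma inS_power: "inS N x \<Longrightarrow> inS N (x ^ n)"
  by (induction n) (auto intro: inS_mult inS_1)

lemma mp_const_mult: "mp_const (a * b) = mp_const a * mp_const b"
  by (simp add: mp_const_def mult_single)
lemma mp_const_of_nat: "mp_const (of_nat n) = of_nat n"
  by (simp add: mp_const_def)

lemma emb_of_nat: "emb (of_nat m) = of_nat m"
    by (induction m) (simp_all add: emb_0 emb_1 emb_add)
lemma of_nat_K_nz: "(of_nat (Suc n) :: ratfun_q) \<noteq> 0"
proof
  assume "(of_nat (Suc n) :: ratfun_q) = 0"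
  hence "emb (of_nat (Suc n)) = emb 0"
    using emb_of_nat[of "Suc n"] by (simp add: emb_0)
  hence "(of_nat (Suc n) :: mpoly_q) = 0" by (rule emb_inj)
  hence "mp_const (of_nat (Suc n)) = 0" by (simp only: mp_const_of_nat)
  hence "Poly_Mapping.lookup (mp_const (of_nat (Suc n))) 0 = 0" by simp
  thus False unfolding mp_const_def by (simp add: lookup_single)
qed

lemma inS_inv: "inS N (inverse (of_nat (Suc n)))"
proof -
  define r :: rat where "r = 1 / of_nat (Suc n)"
  have "r * of_nat (Suc n) = 1" unfolding r_def by simp
  hence "mp_const r * mp_const (of_nat (Suc n)) = 1"
    by (simp only: mp_const_mult[symmetric]) (simp add: mp_const_def)
  hence "emb (mp_const r) * emb (of_nat (Suc n)) = 1"
    by (simp only: emb_mult[symmetric] mp_const_of_nat emb_1)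
  hence "emb (mp_const r) * of_nat (Suc n) = 1" by (simp only: emb_of_nat)
  hence "inverse (of_nat (Suc n)) = emb (mp_const r)"
    using of_nat_K_nz[of n] by (simp add: field_simps)
  thus ?thesis using inS_const by simp
qed


definition pS :: "nat \<Rightarrow> ratfun_q poly \<Rightarrow> bool" where
  "pS N p \<longleftrightarrow> (\<forall>i. inS N (coeff p i))"

lemma pS_add: "pS N p \<Longrightarrow> pS N q \<Longrightarrow> pS N (p + q)"
  unfolding pS_def by (simp add: inS_add)
lemma pS_uminus: "pS N p \<Longrightarrow> pS N (- p)"
  unfolding pS_def by (simp add: inS_uminus)
lemma pS_diff: "pS N p \<Longrightarrow> pS N q \<Longrightarrow> pS N (p - q)"
  unfolding pS_def by (simp add: inS_diff)
lemma pS_smult: "inS N c \<Longrightarrow> pS N p \<Longrightarrow> pS N (smult c p)"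
  unfolding pS_def by (simp add: inS_mult)
lemma pS_mult: "pS N p \<Longrightarrow> pS N q \<Longrightarrow> pS N (p * q)"
  unfolding pS_def coeff_mult by (auto intro!: inS_sum inS_mult)
lemma pS_const: "inS N c \<Longrightarrow> pS N [:c:]"
  unfolding pS_def by (auto simp: coeff_pCons split: nat.split intro: inS_0)
lemma pS_pCons: "inS N c \<Longrightarrow> pS N p \<Longrightarrow> pS N (pCons c p)"
  unfolding pS_def by (auto simp: coeff_pCons split: nat.split)
lemma pS_0: "pS N 0" unfolding pS_def by (simp add: inS_0)
lemma pS_1: "pS N 1" using pS_const[OF inS_1] by (simp add: one_pCons)
lemma pS_monom: "inS N c \<Longrightarrow> pS N (monom c n)"
  unfolding pS_def by (simp add: coeff_monom inS_0)
lemma pS_sum: "(\<And>i. i \<in> A \<Longrightarrow> pS N (f i)) \<Longrightarrow> pS N (\<Sum>i\<in>A. f i)"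
  by (induction A rule: infinite_finite_induct) (auto intro: pS_0 pS_add)
lemma pS_mono: "pS N p \<Longrightarrow> N \<le> M \<Longrightarrow> pS M p"
  unfolding pS_def using inS_mono by blast
lemma pS_pcompose: "pS N p \<Longrightarrow> pS N q \<Longrightarrow> pS N (pcompose p q)"
proof (induction p)
  case (pCons a p)
  have "inS N a" "pS N p" using pCons.prems(1) unfolding pS_def
    by (metis coeff_pCons_0, metis coeff_pCons_Suc)
  thus ?case using pCons by (auto simp: pcompose_pCons intro!: pS_add pS_const pS_mult)
qed (simp add: pS_0)

lemma inS_inv': "inS N (inverse (1 + of_nat n))" using inS_inv[of N n] by simp

fun Fa :: "nat \<Rightarrow> ratfun_q poly" where
  "Fa d = smult (inverse (of_nat (Suc d)))
     (monom 1 (Suc d) - (\<Sum>i<d. smult (of_nat (Suc d choose i)) (Fa i)))"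

declare Fa.simps[simp del]

lemma Fa_pS: "pS 0 (Fa d)"
proof (induction d rule: less_induct)
  case (less d)
  show ?case
    by (subst Fa.simps) (auto intro!: pS_smult inS_inv' pS_diff pS_monom inS_1 pS_sum inS_of_nat less)
qed

lemma Fa_zero: "poly (Fa d) 0 = 0"
proof (induction d rule: less_induct)
  case (less d)
  show ?case by (subst Fa.simps) (simp add: poly_sum less poly_monom)
qed

lemma Fa_deg: "degree (Fa d) \<le> Suc d"
proof (induction d rule: less_induct)
  case (less d)
  have "degree (monom (1::ratfun_q) (Suc d) - (\<Sum>i<d. smult (of_nat (Suc d choose i)) (Fa i))) \<le> Suc d"
  proof (rule degree_diff_le)
    show "degree (monom (1::ratfun_q) (Suc d)) \<le> Suc d" by (rule degree_monom_le)
    show "degree (\<Sum>i<d. smult (of_nat (Suc d choose i)) (Fa i)) \<le> Suc d"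
      by (rule degree_sum_le) (auto intro: order.trans[OF degree_smult_le] order.trans[OF less])
  qed
  thus ?case by (subst Fa.simps) (rule order.trans[OF degree_smult_le])
qed

lemma Fa_diff: "poly (Fa d) (x + 1) - poly (Fa d) x = x ^ d"
proof (induction d rule: less_induct)
  case (less d)
  have bin: "(x + 1) ^ Suc d = (\<Sum>i\<le>Suc d. of_nat (Suc d choose i) * x ^ i)"
    by (subst binomial_ring) simp
  have "(x + 1) ^ Suc d - x ^ Suc d = (\<Sum>i\<le>d. of_nat (Suc d choose i) * x ^ i)"
    unfolding bin by (simp add: sum.atMost_Suc)
  also have "\<dots> = (\<Sum>i<d. of_nat (Suc d choose i) * x ^ i) + of_nat (Suc d) * x ^ d"
    by (simp add: lessThan_Suc_atMost[symmetric])
  finally have e: "(x + 1) ^ Suc d - x ^ Suc d - (\<Sum>i<d. of_nat (Suc d choose i) * x ^ i)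
      = of_nat (Suc d) * x ^ d" by simp
  have "poly (Fa d) (x + 1) - poly (Fa d) x = inverse (of_nat (Suc d)) *
     ((x + 1) ^ Suc d - x ^ Suc d - (\<Sum>i<d. of_nat (Suc d choose i) * (poly (Fa i) (x+1) - poly (Fa i) x)))"
    by (subst (1 2) Fa.simps) (simp add: poly_sum poly_monom algebra_simps sum_subtractf)
  also have "\<dots> = inverse (of_nat (Suc d)) * (of_nat (Suc d) * x ^ d)"
    using e less by simp
  also have "\<dots> = x ^ d" using of_nat_K_nz[of d] by simp
  finally show ?case .
qed

lemma Fa_0_eq: "Fa 0 = [:0, 1:]"
  by (subst Fa.simps) (simp add: monom_Suc)

definition antidiff :: "ratfun_q poly \<Rightarrow> ratfun_q poly" where
  "antidiff q = (\<Sum>i\<le>degree q. smult (coeff q i) (Fa i))"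

lemma antidiff_alt: "degree q \<le> N \<Longrightarrow> antidiff q = (\<Sum>i\<le>N. smult (coeff q i) (Fa i))"
  unfolding antidiff_def
  by (rule sum.mono_neutral_left) (auto simp: coeff_eq_0)

lemma antidiff_add: "antidiff (p + q) = antidiff p + antidiff q"
proof -
  define N where "N = max (degree p) (degree q)"
  have "degree (p + q) \<le> N" unfolding N_def by (rule degree_add_le) auto
  thus ?thesis
    by (simp add: antidiff_alt[of _ N] N_def smult_add_left sum.distrib)
qed

lemma antidiff_const: "antidiff [:c:] = smult c [:0, 1:]"
  by (simp add: antidiff_def Fa_0_eq)

lemma antidiff_diff: "poly (antidiff q) (x + 1) - poly (antidiff q) x = poly q x"
  unfolding antidiff_def poly_altdef[of q x]
  by (simp add: poly_sum sum_subtractf[symmetric] right_diff_distrib[symmetric] Fa_diff)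

lemma antidiff_zero: "poly (antidiff q) 0 = 0"
  unfolding antidiff_def by (simp add: poly_sum Fa_zero)

lemma antidiff_deg: "degree (antidiff q) \<le> Suc (degree q)"
  unfolding antidiff_def
  by (rule degree_sum_le) (auto intro: order.trans[OF degree_smult_le] order.trans[OF Fa_deg])

lemma antidiff_pS: "pS N q \<Longrightarrow> pS N (antidiff q)"
  unfolding antidiff_def using pS_def
  by (auto intro!: pS_sum pS_smult pS_mono[OF Fa_pS])



definition aco :: "nat \<Rightarrow> ratfun_q" where "aco i = emb (mp_var i)"

lemma aser_nth: "fps_nth aser i = aco i" by (simp add: aser_def aco_def)

fun gp :: "nat \<Rightarrow> ratfun_q poly" where
  "gp 0 = 1"
| "gp (Suc m) = antidiff (- ([:0, 1:] * pcompose (gp m) [:1, 1:]) + (\<Sum>i<m. smult (aco (m - 1 - i)) (gp i)))"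

lemma gp_diff: "poly (gp (Suc m)) (x + 1) - poly (gp (Suc m)) x
   = - x * poly (gp m) (x + 1) + (\<Sum>i<m. aco (m - 1 - i) * poly (gp i) x)"
  by (simp only: gp.simps(2) antidiff_diff) (simp add: poly_sum poly_pcompose add.commute)

lemma gp_zero: "poly (gp (Suc m)) 0 = 0"
  by (simp only: gp.simps(2) antidiff_zero)

lemma gp_zero': "poly (gp m) 0 = (if m = 0 then 1 else 0)"
proof (cases m)
  case (Suc k) thus ?thesis using gp_zero[of k] by (simp del: gp.simps)
qed simp

lemma gp_deg: "degree (gp m) \<le> 2 * m"
proof (induction m rule: less_induct)
  case (less m)
  show ?case
  proof (cases m)
    case 0 thus ?thesis by simp
  next
    case (Suc k)
    have d1: "degree (- ([:0, 1:] * pcompose (gp k) [:1, 1::ratfun_q:])) \<le> Suc (2 * k)"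
    proof -
      have "degree ([:0, 1:] * pcompose (gp k) [:1, 1::ratfun_q:]) \<le> degree [:0, 1::ratfun_q:] + degree (pcompose (gp k) [:1, 1::ratfun_q:])"
        by (rule degree_mult_le)
      also have "\<dots> \<le> 1 + 2 * k" using less[of k] Suc by (simp add: degree_pcompose)
      also have "\<dots> = Suc (2 * k)" by simp
      finally show ?thesis by (simp only: degree_minus)
    qed
    have d2: "degree (\<Sum>i<k. smult (aco (k - 1 - i)) (gp i)) \<le> Suc (2 * k)"
    proof (rule degree_sum_le)
      fix i assume "i \<in> {..<k}"
      hence "degree (gp i) \<le> 2 * i" "i < k" using less[of i] Suc by auto
      thus "degree (smult (aco (k - 1 - i)) (gp i)) \<le> Suc (2 * k)"
        by (intro order.trans[OF degree_smult_le]) simp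
    qed simp
    have "degree (- ([:0, 1:] * pcompose (gp k) [:1, 1:]) + (\<Sum>i<k. smult (aco (k - 1 - i)) (gp i))) \<le> Suc (2 * k)"
      using d1 d2 by (rule degree_add_le)
    hence "degree (gp (Suc k)) \<le> Suc (Suc (2 * k))"
      by (simp only: gp.simps(2)) (rule order.trans[OF antidiff_deg], simp)
    thus ?thesis using Suc by simp
  qed
qed

lemma inS_aco: "i < N \<Longrightarrow> inS N (aco i)"
  unfolding aco_def by (rule inS_var)

lemma pS_basic: "pS N [:c, d:]" if "inS N c" "inS N d"
  using that by (intro pS_pCons pS_const)

lemma pS_gp: "pS (m - 1) (gp m)"
proof (induction m rule: less_induct)
  case (less m)
  show ?case
  proof (cases m)
    case 0 thus ?thesis by (simp add: pS_1)
  next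
    case (Suc k)
    have a: "pS k (gp k)" using less[of k] Suc pS_mono by simp
    have b: "pS k (- ([:0, 1:] * pcompose (gp k) [:1, 1:]))"
      using a by (intro pS_uminus pS_mult pS_pcompose pS_basic inS_0 inS_1)
    have c: "pS k (\<Sum>i<k. smult (aco (k - 1 - i)) (gp i))"
    proof (rule pS_sum)
      fix i assume "i \<in> {..<k}"
      hence "i < k" by simp
      thus "pS k (smult (aco (k - 1 - i)) (gp i))"
        using less[of i] Suc by (auto intro!: pS_smult inS_aco elim: pS_mono)
    qed
    show ?thesis using b c Suc by (simp only: gp.simps(2)) (auto intro!: antidiff_pS pS_add)
  qed
qed

lemma gp_split: "pS m (gp (Suc (Suc m)) - smult (aco m) [:0, 1:])"
proof -
  define Q where "Q = - ([:0, 1:] * pcompose (gp (Suc m)) [:1, 1:]) +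
     (\<Sum>i<m. smult (aco (m - Suc i)) (gp (Suc i)))"
  have "(\<Sum>i<Suc m. smult (aco (Suc m - 1 - i)) (gp i)) =
        smult (aco m) (gp 0) + (\<Sum>i<m. smult (aco (m - Suc i)) (gp (Suc i)))"
    by (subst sum.lessThan_Suc_shift) simp
  hence "gp (Suc (Suc m)) = antidiff (Q + [:aco m:])"
    by (simp only: gp.simps(2) Q_def) (simp add: algebra_simps)
  hence e: "gp (Suc (Suc m)) - smult (aco m) [:0, 1:] = antidiff Q"
    by (simp add: antidiff_add antidiff_const)
  have a: "pS m (gp (Suc m))" using pS_gp[of "Suc m"] by simp
  have b: "pS m (- ([:0, 1:] * pcompose (gp (Suc m)) [:1, 1:]))"
    using a by (intro pS_uminus pS_mult pS_pcompose pS_basic inS_0 inS_1)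
  have c: "pS m (\<Sum>i<m. smult (aco (m - Suc i)) (gp (Suc i)))"
  proof (rule pS_sum)
    fix i assume "i \<in> {..<m}"
    hence "i < m" by simp
    thus "pS m (smult (aco (m - Suc i)) (gp (Suc i)))"
      using pS_gp[of "Suc i"] by (auto intro!: pS_smult inS_aco elim: pS_mono)
  qed
  show ?thesis unfolding e Q_def using b c by (intro antidiff_pS pS_add)
qed



declare gp.simps(2)[simp del]

definition Gam :: "ratfun_q \<Rightarrow> ratfun_q fps" where
  "Gam x = Abs_fps (\<lambda>m. poly (gp m) x)"

abbreviation Aser :: "ratfun_q fps" where "Aser \<equiv> 1 + aser * fps_X ^ 2"

lemma Gam_nth: "fps_nth (Gam x) m = poly (gp m) x" by (simp add: Gam_def)

lemma Aser_nth: "fps_nth Aser k = (if k = 0 then 1 else 0) + (if k < 2 then 0 else aco (k - 2))"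
  by (simp add: fps_X_power_mult_right_nth aser_nth)

lemma Gam_rec: "Gam (x + 1) * (1 + fps_const x * fps_X) = Gam x * Aser"
proof (rule fps_ext)
  fix n
  have e1: "Gam (x + 1) * (1 + fps_const x * fps_X) = Gam (x + 1) + fps_const x * (fps_X * Gam (x + 1))"
    by (simp add: algebra_simps)
  have L: "fps_nth (Gam (x + 1) * (1 + fps_const x * fps_X)) n
      = poly (gp n) (x + 1) + (if n = 0 then 0 else x * poly (gp (n - 1)) (x + 1))"
    unfolding e1 by (simp add: Gam_nth)
  have e2: "Gam x * Aser = Gam x + (Gam x * aser) * fps_X ^ 2"
    by (simp add: algebra_simps)
  have R: "fps_nth (Gam x * Aser) n = poly (gp n) x +
      (if n < 2 then 0 else (\<Sum>i=0..n-2. poly (gp i) x * aco (n - 2 - i)))"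
    unfolding e2 fps_add_nth fps_X_power_mult_right_nth by (simp add: fps_mult_nth Gam_nth aser_nth)
  show "fps_nth (Gam (x + 1) * (1 + fps_const x * fps_X)) n = fps_nth (Gam x * Aser) n"
  proof (cases n)
    case 0 thus ?thesis using L R by simp
  next
    case (Suc m)
    have s: "(\<Sum>i<m. aco (m - 1 - i) * poly (gp i) x) =
       (if Suc m < 2 then 0 else (\<Sum>i=0..Suc m-2. poly (gp i) x * aco (Suc m - 2 - i)))"
    proof (cases m)
      case (Suc k)
      have "{..<m} = {0..Suc m - 2}" using Suc by auto
      thus ?thesis using Suc by (simp add: mult.commute)
    qed simp
    have "fps_nth (Gam (x + 1) * (1 + fps_const x * fps_X)) n = poly (gp (Suc m)) (x + 1) + x * poly (gp m) (x + 1)"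
      using L Suc by simp
    also have "\<dots> = poly (gp (Suc m)) x + (\<Sum>i<m. aco (m - 1 - i) * poly (gp i) x)"
      using gp_diff[of m x] by (simp add: algebra_simps)
    also have "\<dots> = fps_nth (Gam x * Aser) n"
      using R s Suc by simp
    finally show ?thesis .
  qed
qed

lemma Gam_0: "Gam 0 = 1"
  by (rule fps_ext) (simp add: Gam_nth gp_zero')

lemma unit_inv: "fps_nth f 0 \<noteq> 0 \<Longrightarrow> f * inverse f = (1 :: ratfun_q fps)"
  by (rule inverse_mult_eq_1')

lemma G_eq: "Gser j = Gam (of_nat j)"
proof (induction j)
  case 0 thus ?case by (simp add: Gser_def Gam_0)
next
  case (Suc j)
  define B :: "ratfun_q fps" where "B = 1 + fps_const (of_nat j) * fps_X"
  have B0: "fps_nth B 0 = 1" unfolding B_def by simp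
  have "Gser (Suc j) = Gser j * (Aser / (1 + of_nat j * fps_X))"
    unfolding Gser_def by (simp add: prod.atLeast0_lessThan_Suc)
  also have "(1 + of_nat j * fps_X :: ratfun_q fps) = B" unfolding B_def by (simp add: fps_of_nat)
  also have "Aser / B = Aser * inverse B" using B0 by (simp add: fps_divide_unit)
  also have "Gser j * (Aser * inverse B) = Gam (of_nat j + 1) * (B * inverse B)"
    using Gam_rec[of "of_nat j"] Suc by (simp add: B_def mult.assoc[symmetric])
  also have "\<dots> = Gam (of_nat (Suc j))" using unit_inv[of B] B0 by (simp add: add.commute)
  finally show ?case .
qed

lemma H_eq: "Hser (Suc k) = Gam (- of_nat k)"
proof (induction k)
  case 0 thus ?case by (simp add: Hser_def Gam_0)
next
  case (Suc k)
  define B :: "ratfun_q fps" where "B = 1 + fps_const (- of_nat (Suc k)) * fps_X"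
  have A0: "fps_nth Aser 0 = 1" by simp
  have set: "{1 - int (Suc (Suc k)) .. -1} = insert (- int (Suc k)) {1 - int (Suc k) .. -1}"
    by (rule set_eqI) (simp add: atLeastAtMost_iff, linarith)
  have r: "Gam (- of_nat k) * B = Gam (- of_nat (Suc k)) * Aser"
    using Gam_rec[of "- of_nat (Suc k)"] unfolding B_def by simp
  have "Hser (Suc (Suc k)) = (1 + of_int (- int (Suc k)) * fps_X) / Aser * Hser (Suc k)"
    unfolding Hser_def set by (subst prod.insert) auto
  also have "(1 + of_int (- int (Suc k)) * fps_X :: ratfun_q fps) = B"
    unfolding B_def by (simp add: fps_of_int[symmetric])
  also have "B / Aser = B * inverse Aser" using A0 by (simp add: fps_divide_unit)
  also have "B * inverse Aser * Hser (Suc k) = (Gam (- of_nat k) * B) * inverse Aser"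
    unfolding Suc.IH by (simp only: mult_ac)
  also have "\<dots> = Gam (- of_nat (Suc k)) * (Aser * inverse Aser)"
    unfolding r by (simp only: mult_ac)
  also have "\<dots> = Gam (- of_nat (Suc k))" using unit_inv[of Aser] A0 by simp
  finally show ?case .
qed

definition dl :: "nat \<Rightarrow> ratfun_q poly" where
  "dl m = gp m - pcompose (gp m) [:1, -1:]"

definition Pn :: "nat \<Rightarrow> ratfun_q poly" where
  "Pn n = (\<Sum>i<n. smult (fps_nth Aser (n - 1 - i)) (dl (Suc (Suc i))))"

lemma dl_poly: "poly (dl m) x = poly (gp m) x - poly (gp m) (1 - x)"
  by (simp add: dl_def poly_pcompose)

lemma coef_eq:
  assumes "n \<ge> 1" "j \<ge> 1"
  shows "fps_nth ((Gser j - Hser j) / fps_X ^ 2 * Aser) (n - 1) = poly (Pn n) (of_nat j)"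
proof -
  obtain k where k: "j = Suc k" using assms(2) by (cases j) auto
  have H: "Hser j = Gam (1 - of_nat j)" using H_eq[of k] k by simp
  have D: "fps_nth (Gser j) m - fps_nth (Hser j) m = poly (dl m) (of_nat j)" for m
    by (simp add: G_eq H Gam_nth dl_poly)
  have "fps_nth ((Gser j - Hser j) / fps_X ^ 2 * Aser) (n - 1) =
        (\<Sum>i=0..n-1. fps_nth (Gser j - Hser j) (i + 2) * fps_nth Aser (n - 1 - i))"
    by (simp only: fps_divide_X_power fps_mult_nth fps_shift_nth)
  also have "\<dots> = (\<Sum>i<n. fps_nth Aser (n - 1 - i) * poly (dl (Suc (Suc i))) (of_nat j))"
  proof -
    have "{0..n-1} = {..<n}" using assms(1) by auto
    thus ?thesis by (simp add: D mult.commute)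
  qed
  also have "\<dots> = poly (Pn n) (of_nat j)"
    by (simp add: Pn_def poly_sum)
  finally show ?thesis .
qed



lemma two_nz: "(2::ratfun_q) \<noteq> 0" using of_nat_K_nz[of 1] by simp

lemma inS_half: "inS N (inverse (2::ratfun_q))" using inS_inv[of N 1] by simp

lemma decomp:
  "degree P \<le> k \<Longrightarrow> pS N P \<Longrightarrow> \<exists>A B. pS N A \<and> pS N B \<and> degree A \<le> k div 2 \<and>
     degree B \<le> (k - 1) div 2 \<and> (k = 0 \<longrightarrow> B = 0) \<and>
     (\<forall>x. poly P x = poly A (x^2 - x) + (2 * x - 1) * poly B (x^2 - x))"
proof (induction k arbitrary: P)
  case 0
  hence d: "degree P = 0" by simp
  have "P = [:coeff P 0:]" using degree_0_id[OF d] by simp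
  hence "poly P y = coeff P 0" for y by (metis poly_pCons poly_0 mult_zero_right add_0_right)
  thus ?case using 0 d by (intro exI[of _ P] exI[of _ 0]) (simp add: pS_0)
next
  case (Suc k)
  obtain c P' where P: "P = pCons c P'" by (cases P)
  have dP': "degree P' \<le> k" using Suc.prems(1) P by (auto split: if_splits)
  have cS: "inS N c" using Suc.prems(2) P unfolding pS_def by (metis coeff_pCons_0)
  have P'S: "pS N P'" using Suc.prems(2) P unfolding pS_def by (metis coeff_pCons_Suc)
  obtain A' B' where IH: "pS N A'" "pS N B'" "degree A' \<le> k div 2" "degree B' \<le> (k - 1) div 2"
      "k = 0 \<longrightarrow> B' = 0" "\<forall>x. poly P' x = poly A' (x^2 - x) + (2 * x - 1) * poly B' (x^2 - x)"
    using Suc.IH[OF dP' P'S] by blast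
  define h :: ratfun_q where "h = inverse 2"
  have hS: "inS N h" unfolding h_def by (rule inS_half)
  have h2: "2 * h = 1" unfolding h_def using two_nz by simp
  define A where "A = [:c:] + smult h A' + [:h, 2:] * B'"
  define B where "B = smult h (A' + B')"
  have AS: "pS N A" unfolding A_def using IH hS cS
    by (intro pS_add pS_const pS_smult pS_mult pS_basic inS_of_nat) (auto simp: inS_of_nat[of N 2, simplified])
  have BS: "pS N B" unfolding B_def using IH hS by (intro pS_smult pS_add)
  have dB: "degree B \<le> (Suc k - 1) div 2"
  proof -
    have "degree (A' + B') \<le> k div 2"
      using IH(3,4) by (intro degree_add_le) (auto intro: order.trans[of _ "(k - 1) div 2"])
    thus ?thesis unfolding B_def by (auto intro: order.trans[OF degree_smult_le])
  qed
  have dA: "degree A \<le> Suc k div 2"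
  proof -
    have d1: "degree ([:c:] + smult h A') \<le> Suc k div 2"
      using IH(3) by (intro degree_add_le) (auto intro: order.trans[OF degree_smult_le] order.trans[of _ "k div 2"])
    have d2: "degree ([:h, 2:] * B') \<le> Suc k div 2"
    proof (cases "k = 0")
      case True thus ?thesis using IH(5) by simp
    next
      case False
      have "degree ([:h, 2:] * B') \<le> degree [:h, 2::ratfun_q:] + degree B'" by (rule degree_mult_le)
      also have "\<dots> \<le> 1 + (k - 1) div 2" using IH(4) two_nz by simp
      also have "\<dots> = Suc k div 2" using False by linarith
      finally show ?thesis .
    qed
    show ?thesis unfolding A_def using d1 d2 by (rule degree_add_le)
  qed
  have ev: "poly P x = poly A (x^2 - x) + (2 * x - 1) * poly B (x^2 - x)" for x
  proof -
    define a where "a = poly A' (x^2 - x)"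
    define b where "b = poly B' (x^2 - x)"
    have "poly P x = c + x * (a + (2 * x - 1) * b)" using P IH(6) unfolding a_def b_def by simp
    moreover have "poly A (x^2 - x) + (2 * x - 1) * poly B (x^2 - x) =
        c + h * a + (h + (x^2 - x) * 2) * b + (2 * x - 1) * (h * (a + b))"
      unfolding A_def B_def a_def b_def by (simp add: algebra_simps)
    moreover have "c + h * a + (h + (x^2 - x) * 2) * b + (2 * x - 1) * (h * (a + b)) =
        c + x * (a + (2 * x - 1) * b) + (a + b) * x * (2 * h - 1)"
      by (simp add: algebra_simps power2_eq_square)
    ultimately show ?thesis using h2 by simp
  qed
  show ?case using AS BS dA dB ev by blast
qed



lemma dl_odd: "poly (dl m) (1 - x) = - poly (dl m) x"
  by (simp add: dl_poly)

lemma Pn_odd: "poly (Pn n) (1 - x) = - poly (Pn n) x"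
  by (simp add: Pn_def poly_sum dl_odd sum_negf)

lemma r_S: "pS N [:1, -1:]" by (intro pS_basic inS_1 inS_uminus)

lemma dl_pS: "pS (m - 1) (dl m)"
  unfolding dl_def using pS_gp[of m] by (intro pS_diff pS_pcompose r_S)

lemma dl_deg: "degree (dl m) \<le> 2 * m"
proof -
  have "degree (pcompose (gp m) [:1, -1:]) \<le> 2 * m"
    using gp_deg[of m] by (simp add: degree_pcompose)
  thus ?thesis unfolding dl_def using gp_deg[of m] by (intro degree_diff_le)
qed

lemma inS_Aser: assumes "k \<le> N + 1" shows "inS N (fps_nth Aser k)"
proof -
  have "inS N ((if k = 0 then 1 else 0) + (if k < 2 then 0 else aco (k - 2)))"
    using assms by (auto intro!: inS_add inS_0 inS_1 inS_aco)
  thus ?thesis by (simp only: Aser_nth)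
qed

lemma Pp_props:
  fixes k :: nat
  defines "Pp \<equiv> Pn (Suc k) - smult (aco k) [:-1, 2:]"
  shows "pS k Pp" "degree Pp \<le> 2 * Suc k + 2" "\<And>x. poly Pp (1 - x) = - poly Pp x"
proof -
  define h where "h = gp (Suc (Suc k)) - smult (aco k) [:0, 1:]"
  have hS: "pS k h" unfolding h_def by (rule gp_split)
  have dlk: "dl (Suc (Suc k)) = smult (aco k) [:-1, 2:] + (h - pcompose h [:1, -1:])"
  proof -
    have g: "gp (Suc (Suc k)) = smult (aco k) [:0, 1:] + h" unfolding h_def by simp
    show ?thesis unfolding dl_def g
      by (simp add: pcompose_add pcompose_smult pcompose_pCons algebra_simps smult_add_right[symmetric]
            del: smult_add_right)
  qed
  have Pe: "Pp = (\<Sum>i<k. smult (fps_nth Aser (k - i)) (dl (Suc (Suc i)))) + (h - pcompose h [:1, -1:])"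
    unfolding Pp_def Pn_def by (simp add: dlk)
  show "pS k Pp" unfolding Pe
  proof (intro pS_add pS_sum pS_diff pS_pcompose hS r_S)
    fix i assume "i \<in> {..<k}"
    hence i: "i < k" by simp
    show "pS k (smult (fps_nth Aser (k - i)) (dl (Suc (Suc i))))"
      using i dl_pS[of "Suc (Suc i)"] by (intro pS_smult inS_Aser) (auto elim: pS_mono)
  qed
  have d1: "degree (Pn (Suc k)) \<le> 2 * Suc k + 2"
    unfolding Pn_def
  proof (rule degree_sum_le)
    fix i assume "i \<in> {..<Suc k}"
    thus "degree (smult (fps_nth Aser (Suc k - 1 - i)) (dl (Suc (Suc i)))) \<le> 2 * Suc k + 2"
      using dl_deg[of "Suc (Suc i)"] by (intro order.trans[OF degree_smult_le]) auto
  qed simp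
  have d2: "degree (smult (aco k) [:-1, 2:]) \<le> 2 * Suc k + 2"
    by (rule order.trans[OF degree_smult_le]) simp
  show "degree Pp \<le> 2 * Suc k + 2" unfolding Pp_def using d1 d2 by (rule degree_diff_le)
  show "poly Pp (1 - x) = - poly Pp x" for x
    unfolding Pp_def by (simp add: Pn_odd algebra_simps)
qed

lemma main_exists:
  "\<exists>B. pS k B \<and> degree B \<le> Suc k \<and>
     (\<forall>x. poly (Pn (Suc k)) x = (2 * x - 1) * (aco k + poly B (x^2 - x)))"
proof -
  define Pp where "Pp = Pn (Suc k) - smult (aco k) [:-1, 2:]"
  note pp = Pp_props[of k, folded Pp_def]
  obtain A B where AB: "pS k A" "pS k B" "degree B \<le> (2 * Suc k + 2 - 1) div 2"
     "\<forall>x. poly Pp x = poly A (x^2 - x) + (2 * x - 1) * poly B (x^2 - x)"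
    using decomp[OF pp(2) pp(1)] by blast
  have "poly A (x^2 - x) = 0" for x
  proof -
    have v: "(1 - x)^2 - (1 - x) = x^2 - x" by (simp add: algebra_simps power2_eq_square)
    have e1: "poly Pp x = poly A (x^2 - x) + (2 * x - 1) * poly B (x^2 - x)" using AB(4) by blast
    have e2: "poly Pp (1 - x) = poly A (x^2 - x) + (2 * (1 - x) - 1) * poly B (x^2 - x)"
      using AB(4)[rule_format, of "1 - x"] unfolding v .
    have "poly Pp x + poly Pp (1 - x) = 2 * poly A (x^2 - x)"
      unfolding e1 e2 by (simp add: algebra_simps)
    moreover have "poly Pp x + poly Pp (1 - x) = 0" using pp(3)[of x] by simp
    ultimately have "2 * poly A (x^2 - x) = 0" by simp
    thus ?thesis using two_nz by simp
  qed
  hence "poly (Pn (Suc k)) x = (2 * x - 1) * (aco k + poly B (x^2 - x))" for x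
    using AB(4) unfolding Pp_def by (simp add: algebra_simps)
  moreover have "degree B \<le> Suc k" using AB(3) by simp
  ultimately show ?thesis using AB(2) by blast
qed



lemma int_unique:
  fixes f g :: "ratfun_q \<Rightarrow> ratfun_q"
  assumes d: "\<And>t::int. f (of_int t + 1) - f (of_int t) = g (of_int t + 1) - g (of_int t)"
    and z: "f 0 = g 0"
  shows "f (of_int t) = g (of_int t)"
proof (induction t rule: int_induct[where k=0])
  case base thus ?case using z by simp
next
  case (step1 i)
  have "f (of_int i + 1) = g (of_int i + 1)" using d[of i] step1(2) by (simp add: algebra_simps)
  thus ?case by simp
next
  case (step2 i)
  have "f (of_int (i - 1) + 1) = f (of_int i)" "g (of_int (i - 1) + 1) = g (of_int i)" by simp_all
  thus ?case using d[of "i - 1"] step2(2) by (simp add: algebra_simps)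
qed

definition t24 :: ratfun_q where "t24 = emb (mp_const (1 / 24))"

lemma emb_const_nat: "emb (mp_const (of_nat n)) = of_nat n"
  by (simp only: mp_const_of_nat emb_of_nat)

lemma t24_24: "24 * t24 = 1"
proof -
  have "emb (mp_const (of_nat 24)) * t24 = emb (mp_const (of_nat 24 * (1 / 24)))"
    unfolding t24_def by (simp only: mp_const_mult emb_mult)
  also have "\<dots> = 1" by (simp add: mp_const_def emb_1)
  finally show ?thesis by (simp only: emb_const_nat) simp
qed

lemma sixth: "emb (mp_const (1 / 6)) = 4 * t24"
proof -
  have "emb (mp_const (1 / 6)) = emb (mp_const (of_nat 4 * (1 / 24)))" by simp
  also have "\<dots> = emb (mp_const (of_nat 4)) * t24" unfolding t24_def by (simp only: mp_const_mult emb_mult)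
  finally show ?thesis by (simp only: emb_const_nat) simp
qed

definition E1 :: "ratfun_q \<Rightarrow> ratfun_q" where "E1 x = - (12 * t24) * (x^2 - x)"
definition E2 :: "ratfun_q \<Rightarrow> ratfun_q" where
  "E2 x = aco 0 * x + t24 * (3 * x^2 * (x - 1)^2 + 2 * x * (x - 1) * (2 * x - 1))"

lemma g1: "poly (gp 1) (of_int t) = E1 (of_int t)"
proof (rule int_unique[of "poly (gp 1)" E1])
  fix t :: int
  define x :: ratfun_q where "x = of_int t"
  have "poly (gp 1) (x + 1) - poly (gp 1) x = - x" using gp_diff[of 0 x] by simp
  moreover have "E1 (x + 1) - E1 x = - ((24 * t24) * x)" unfolding E1_def by (simp add: algebra_simps power2_eq_square)
  ultimately show "poly (gp 1) (of_int t + 1) - poly (gp 1) (of_int t) = E1 (of_int t + 1) - E1 (of_int t)"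
    unfolding x_def t24_24 by simp
qed (simp add: E1_def gp_zero')

lemma g2: "poly (gp 2) (of_int t) = E2 (of_int t)"
proof (rule int_unique[of "poly (gp 2)" E2])
  fix t :: int
  define x :: ratfun_q where "x = of_int t"
  have "poly (gp (Suc (Suc 0))) (x + 1) - poly (gp (Suc (Suc 0))) x = - x * poly (gp 1) (x + 1) + aco 0"
    using gp_diff[of "Suc 0" x] by simp
  also have "poly (gp 1) (x + 1) = E1 (x + 1)" using g1[of "t + 1"] unfolding x_def by simp
  finally have "poly (gp 2) (x + 1) - poly (gp 2) x = - x * E1 (x + 1) + aco 0"
    by (simp add: numeral_2_eq_2)
  moreover have "E2 (x + 1) - E2 x = - x * E1 (x + 1) + aco 0"
    unfolding E1_def E2_def by (simp add: algebra_simps power2_eq_square)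
  ultimately show "poly (gp 2) (of_int t + 1) - poly (gp 2) (of_int t) = E2 (of_int t + 1) - E2 (of_int t)"
    unfolding x_def by simp
qed (simp add: E2_def gp_zero')

lemma Pn1: "poly (Pn 1) (of_nat j) = (2 * of_nat j - 1) * (aco 0 + emb (mp_const (1 / 6)) * ((of_nat j)^2 - of_nat j))"
proof -
  have "Pn 1 = dl 2" by (simp add: Pn_def numeral_2_eq_2)
  hence "poly (Pn 1) (of_nat j) = poly (gp 2) (of_int (int j)) - poly (gp 2) (of_int (1 - int j))"
    by (simp add: dl_poly)
  also have "\<dots> = E2 (of_nat j) - E2 (1 - of_nat j)" by (simp only: g2) simp
  also have "\<dots> = (2 * of_nat j - 1) * (aco 0 + (4 * t24) * ((of_nat j)^2 - of_nat j))"
    unfolding E2_def by (simp add: algebra_simps power2_eq_square)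
  finally show ?thesis by (simp only: sixth)
qed



lemma mp_vars_zero: "mp_vars 0 = {}" unfolding mp_vars_def by simp

lemma poly_sum_upto:
  fixes B :: "ratfun_q poly"
  assumes "degree B \<le> n"
  shows "poly B v = (\<Sum>i\<le>n. coeff B i * v ^ i)"
proof -
  have "poly B v = (\<Sum>i\<le>degree B. coeff B i * v ^ i)" by (rule poly_altdef)
  also have "\<dots> = (\<Sum>i\<le>n. coeff B i * v ^ i)"
    using assms by (intro sum.mono_neutral_left) (auto simp: coeff_eq_0)
  finally show ?thesis .
qed

theorem lemma2p2:
  "\<exists>S :: nat \<Rightarrow> nat \<Rightarrow> mpoly_q.
     (\<forall>n\<ge>1. \<forall>i. mp_vars (S i n) \<subseteq> {k. k + 2 \<le> n}) \<and>
     (\<forall>n\<ge>1. \<forall>j::nat. j \<ge> 1 \<longrightarrow>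
        fps_nth ((Gser j - Hser j) / fps_X ^ 2 * (1 + aser * fps_X ^ 2)) (n - 1)
        = of_nat (2 * j - 1) *
          (emb (mp_var (n - 1)) + (\<Sum>i\<le>n. emb (S i n) * of_nat (j * (j - 1)) ^ i))) \<and>
     S 0 1 = 0 \<and> S 1 1 = mp_const (1 / 6)"
proof -
  define Bsel where "Bsel n = (SOME B. pS (n - 1) B \<and> degree B \<le> n \<and>
     (\<forall>x. poly (Pn n) x = (2 * x - 1) * (aco (n - 1) + poly B (x^2 - x))))" for n
  have Bsel: "pS (n - 1) (Bsel n) \<and> degree (Bsel n) \<le> n \<and>
     (\<forall>x. poly (Pn n) x = (2 * x - 1) * (aco (n - 1) + poly (Bsel n) (x^2 - x)))" if "n \<ge> 1" for n
  proof -
    have "\<exists>B. pS (n - 1) B \<and> degree B \<le> n \<and>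
     (\<forall>x. poly (Pn n) x = (2 * x - 1) * (aco (n - 1) + poly B (x^2 - x)))"
      using main_exists[of "n - 1"] that by simp
    thus ?thesis unfolding Bsel_def by (rule someI_ex)
  qed
  define S where "S i n = (if n = 1 then (if i = 1 then mp_const (1 / 6) else 0)
     else (SOME p. mp_vars p \<subseteq> {k. k + 2 \<le> n} \<and> emb p = coeff (Bsel n) i))" for i n
  have Sspec: "mp_vars (S i n) \<subseteq> {k. k + 2 \<le> n} \<and> emb (S i n) = coeff (Bsel n) i"
    if "n \<ge> 2" for i n
  proof -
    have "inS (n - 1) (coeff (Bsel n) i)" using Bsel[of n] that unfolding pS_def by simp
    then obtain p where p: "mp_vars p \<subseteq> {k. k < n - 1}" "coeff (Bsel n) i = emb p"
      unfolding inS_def by blast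
    have "{k. k < n - 1} = {k. k + 2 \<le> n}" using that by auto
    hence "\<exists>p. mp_vars p \<subseteq> {k. k + 2 \<le> n} \<and> emb p = coeff (Bsel n) i" using p by auto
    hence "mp_vars (SOME p. mp_vars p \<subseteq> {k. k + 2 \<le> n} \<and> emb p = coeff (Bsel n) i) \<subseteq> {k. k + 2 \<le> n} \<and>
       emb (SOME p. mp_vars p \<subseteq> {k. k + 2 \<le> n} \<and> emb p = coeff (Bsel n) i) = coeff (Bsel n) i"
      by (rule someI_ex)
    thus ?thesis using that unfolding S_def by simp
  qed
  have c1: "\<forall>n\<ge>1. \<forall>i. mp_vars (S i n) \<subseteq> {k. k + 2 \<le> n}"
  proof (intro allI impI)
    fix n i :: nat assume n: "n \<ge> 1"
    show "mp_vars (S i n) \<subseteq> {k. k + 2 \<le> n}"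
    proof (cases "n = 1")
      case True thus ?thesis unfolding S_def by (simp add: mp_vars_zero mp_vars_const)
    next
      case False thus ?thesis using Sspec[of n i] n by simp
    qed
  qed
  have c2: "\<forall>n\<ge>1. \<forall>j::nat. j \<ge> 1 \<longrightarrow>
        fps_nth ((Gser j - Hser j) / fps_X ^ 2 * (1 + aser * fps_X ^ 2)) (n - 1)
        = of_nat (2 * j - 1) *
          (emb (mp_var (n - 1)) + (\<Sum>i\<le>n. emb (S i n) * of_nat (j * (j - 1)) ^ i))"
  proof (intro allI impI)
    fix n j :: nat assume n: "n \<ge> 1" and j: "j \<ge> 1"
    have u: "(of_nat (2 * j - 1) :: ratfun_q) = 2 * of_nat j - 1" using j by (simp add: of_nat_diff)
    have v: "(of_nat (j * (j - 1)) :: ratfun_q) = (of_nat j)^2 - of_nat j"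
      using j by (simp add: of_nat_diff power2_eq_square algebra_simps)
    have L: "fps_nth ((Gser j - Hser j) / fps_X ^ 2 * (1 + aser * fps_X ^ 2)) (n - 1) = poly (Pn n) (of_nat j)"
      using coef_eq[OF n j] .
    show "fps_nth ((Gser j - Hser j) / fps_X ^ 2 * (1 + aser * fps_X ^ 2)) (n - 1)
        = of_nat (2 * j - 1) *
          (emb (mp_var (n - 1)) + (\<Sum>i\<le>n. emb (S i n) * of_nat (j * (j - 1)) ^ i))"
    proof (cases "n = 1")
      case True
      have "(\<Sum>i\<le>n. emb (S i n) * of_nat (j * (j - 1)) ^ i) = emb (mp_const (1 / 6)) * ((of_nat j)^2 - of_nat j)"
        using True unfolding v by (simp add: S_def emb_0)
      thus ?thesis unfolding L u using True Pn1[of j] by (simp add: aco_def)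
    next
      case False
      hence n2: "n \<ge> 2" using n by simp
      have "(\<Sum>i\<le>n. emb (S i n) * of_nat (j * (j - 1)) ^ i) = poly (Bsel n) ((of_nat j)^2 - of_nat j)"
        using Sspec[OF n2] Bsel[OF n] unfolding v by (simp add: poly_sum_upto[of _ n])
      thus ?thesis unfolding L u using Bsel[OF n] by (simp add: aco_def)
    qed
  qed
  have c3: "S 0 1 = 0 \<and> S 1 1 = mp_const (1 / 6)" unfolding S_def by simp
  show ?thesis using c1 c2 c3 by blast
qed

end
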